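(* Let $\vec{B}_1,\dots,\vec{B}_d$ ($d\in\mathbb{N}$) be mutually coorthogonal blades in $\mathcal{G}^{p,q}$ with $\vec{B}_k^2\in\mathbb{R}\setminus\{0\}$ (so $\vec B_k^{-1}=\vec B_k\vec B_k^{-2}$), let $\vec{A}\in\mathcal{G}^{p,q}$ and $\vec{j}=(j_1,\dots,j_d)\in\{0,1\}^d$. Then for every permutation $\sigma$ of $\{1,\dots,d\}$, $$\vec{A}_{\vec c^{(j_{\sigma(1)},\dots,j_{\sigma(d)})}(\overrightarrow{\vec B_{\sigma(1)},\dots,\vec B_{\sigma(d)}})}=\vec{A}_{\vec c^{\vec j}(\overrightarrow{\vec B_1,\dots,\vec B_d})}\quad\text{and}\quad \vec{A}_{\vec c^{(j_{\sigma(1)},\dots,j_{\sigma(d)})}(\overleftarrow{\vec B_{\sigma(1)},\dots,\vec B_{\sigma(d)}})}=\vec{A}_{\vec c^{\vec j}(\overleftarrow{\vec B_1,\dots,\vec B_d})},$$ i.e. these expressions do not depend on the order of the blades.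
   Context: $\mathcal{G}^{p,q}$ is the real geometric algebra of $\mathbb{R}^{p,q}$. Blades $\vec A,\vec B$ are coorthogonal if $\vec A\vec B=\pm\vec B\vec A$. For an invertible $\vec B$ and any $\vec A$: $\vec{A}_{\vec c^0(\vec{B})}=\frac12(\vec{A}+\vec{B}^{-1}\vec{A}\vec{B})$, $\vec{A}_{\vec c^1(\vec{B})}=\frac12(\vec{A}-\vec{B}^{-1}\vec{A}\vec{B})$. For an ordered tuple $(\vec B_1,\dots,\vec B_d)$ of invertible elements and $\vec j\in\{0,1\}^d$: $\vec{A}_{\vec c^{\vec{j}}(\overrightarrow{\vec B_1,\dots,\vec B_d})}=((\vec{A}_{\vec c^{j_1}(\vec{B}_1)})_{\vec c^{j_2}(\vec{B}_2)}\cdots)_{\vec c^{j_d}(\vec{B}_d)}$ and $\vec{A}_{\vec c^{\vec{j}}(\overleftarrow{\vec B_1,\dots,\vec B_d})}=((\vec{A}_{\vec c^{j_d}(\vec{B}_d)})_{\vec c^{j_{d-1}}(\vec{B}_{d-1})}\cdots)_{\vec c^{j_1}(\vec{B}_1)}$. *)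

theory Defs
  imports Complex_Main "HOL-Combinatorics.Permutations"
begin

text \<open>Orthonormal basis e_0,...,e_{n-1} (n = p+q), with e_i^2 = 1 for i < p and
  e_i^2 = -1 for p \<le> i < p+q.  A multivector is a coefficient function on
  basis blades e_S indexed by finite subsets S of {0..<p+q}; it is an element
  of G^{p,q} iff its coefficients vanish outside Pow {0..<p+q}.\<close>

type_synonym mv = "nat set \<Rightarrow> real"

definition sig :: "nat \<Rightarrow> nat \<Rightarrow> nat \<Rightarrow> real" where
  "sig p q i = (if i < p then 1 else if i < p + q then -1 else 0)"

text \<open>Sign of reordering e_S e_T into increasing order.\<close>
definition rsign :: "nat set \<Rightarrow> nat set \<Rightarrow> real" where
  "rsign S T = (-1) ^ card {(s, t). s \<in> S \<and> t \<in> T \<and> t < s}"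

definition mv_in :: "nat \<Rightarrow> nat \<Rightarrow> mv \<Rightarrow> bool" where
  "mv_in p q A \<longleftrightarrow> (\<forall>S. \<not> S \<subseteq> {0..<p+q} \<longrightarrow> A S = 0)"

definition scalar :: "real \<Rightarrow> mv" where
  "scalar c = (\<lambda>S. if S = {} then c else 0)"

definition gp :: "nat \<Rightarrow> nat \<Rightarrow> mv \<Rightarrow> mv \<Rightarrow> mv" where
  "gp p q A B = (\<lambda>U. \<Sum>S\<in>Pow {0..<p+q}. \<Sum>T\<in>Pow {0..<p+q}.
      if (S - T) \<union> (T - S) = U
      then A S * B T * rsign S T * (\<Prod>i\<in>S \<inter> T. sig p q i) else 0)"

definition wedge :: "nat \<Rightarrow> nat \<Rightarrow> mv \<Rightarrow> mv \<Rightarrow> mv" where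
  "wedge p q A B = (\<lambda>U. \<Sum>S\<in>Pow {0..<p+q}. \<Sum>T\<in>Pow {0..<p+q}.
      if S \<inter> T = {} \<and> S \<union> T = U then A S * B T * rsign S T else 0)"

definition is_vector :: "nat \<Rightarrow> nat \<Rightarrow> mv \<Rightarrow> bool" where
  "is_vector p q v \<longleftrightarrow> mv_in p q v \<and> (\<forall>S. card S \<noteq> 1 \<longrightarrow> v S = 0)"

definition blade :: "nat \<Rightarrow> nat \<Rightarrow> mv \<Rightarrow> bool" where
  "blade p q B \<longleftrightarrow> (\<exists>c. B = scalar c) \<or>
     (\<exists>vs. (\<forall>v\<in>set vs. is_vector p q v) \<and> B = foldr (wedge p q) vs (scalar 1))"

definition coorthogonal :: "nat \<Rightarrow> nat \<Rightarrow> mv \<Rightarrow> mv \<Rightarrow> bool" where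
  "coorthogonal p q A B \<longleftrightarrow> blade p q A \<and> blade p q B \<and>
     (gp p q A B = gp p q B A \<or> gp p q A B = (\<lambda>S. - gp p q B A S))"

definition ginv :: "nat \<Rightarrow> nat \<Rightarrow> mv \<Rightarrow> mv" where
  "ginv p q B = (THE X. mv_in p q X \<and> gp p q B X = scalar 1 \<and> gp p q X B = scalar 1)"

definition cproj :: "nat \<Rightarrow> nat \<Rightarrow> nat \<Rightarrow> mv \<Rightarrow> mv \<Rightarrow> mv" where
  "cproj p q j B A = (\<lambda>S. if j = 0
      then (A S + gp p q (gp p q (ginv p q B) A) B S) / 2
      else (A S - gp p q (gp p q (ginv p q B) A) B S) / 2)"

text \<open>Forward iteration: first B_1, then B_2, ..., last B_d.\<close>
definition cproj_fwd :: "nat \<Rightarrow> nat \<Rightarrow> nat list \<Rightarrow> mv list \<Rightarrow> mv \<Rightarrow> mv" where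
  "cproj_fwd p q js Bs A = foldl (\<lambda>X (B, j). cproj p q j B X) A (zip Bs js)"

text \<open>Backward iteration: first B_d, then B_{d-1}, ..., last B_1.\<close>
definition cproj_bwd :: "nat \<Rightarrow> nat \<Rightarrow> nat list \<Rightarrow> mv list \<Rightarrow> mv \<Rightarrow> mv" where
  "cproj_bwd p q js Bs A = foldr (\<lambda>(B, j) X. cproj p q j B X) (zip Bs js) A"

end

theory Submission
  imports Defs "HOL-Library.Multiset"
begin

definition sd :: "nat set \<Rightarrow> nat set \<Rightarrow> nat set" where
  "sd S T = (S - T) \<union> (T - S)"

definition cst :: "nat \<Rightarrow> nat \<Rightarrow> nat set \<Rightarrow> nat set \<Rightarrow> real" where
  "cst p q S T = rsign S T * (\<Prod>i\<in>S \<inter> T. sig p q i)"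

definition bp :: "nat \<Rightarrow> nat \<Rightarrow> nat set \<Rightarrow> nat set \<Rightarrow> nat set \<Rightarrow> real" where
  "bp p q S T U = (if sd S T = U then cst p q S T else 0)"

lemma gp_alt: "gp p q A B U = (\<Sum>S\<in>Pow {0..<p+q}. \<Sum>T\<in>Pow {0..<p+q}. A S * B T * bp p q S T U)"
  unfolding gp_def bp_def cst_def sd_def by (auto intro!: sum.cong)

lemma rsign_Un_left:
  assumes "S1 \<inter> S2 = {}" "finite S1" "finite S2" "finite T"
  shows "rsign (S1 \<union> S2) T = rsign S1 T * rsign S2 T"
proof -
  have e: "{(s, t). s \<in> S1 \<union> S2 \<and> t \<in> T \<and> t < s} =
      {(s, t). s \<in> S1 \<and> t \<in> T \<and> t < s} \<union> {(s, t). s \<in> S2 \<and> t \<in> T \<and> t < s}" by auto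
  have f1: "finite {(s, t). s \<in> S1 \<and> t \<in> T \<and> t < s}"
    by (rule finite_subset[of _ "S1 \<times> T"]) (use assms in auto)
  have f2: "finite {(s, t). s \<in> S2 \<and> t \<in> T \<and> t < s}"
    by (rule finite_subset[of _ "S2 \<times> T"]) (use assms in auto)
  show ?thesis unfolding rsign_def e
    by (subst card_Un_disjoint) (use f1 f2 assms in \<open>auto simp: power_add\<close>)
qed

lemma rsign_Un_right:
  assumes "T1 \<inter> T2 = {}" "finite T1" "finite T2" "finite S"
  shows "rsign S (T1 \<union> T2) = rsign S T1 * rsign S T2"
proof -
  have e: "{(s, t). s \<in> S \<and> t \<in> T1 \<union> T2 \<and> t < s} =
      {(s, t). s \<in> S \<and> t \<in> T1 \<and> t < s} \<union> {(s, t). s \<in> S \<and> t \<in> T2 \<and> t < s}" by auto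
  have f1: "finite {(s, t). s \<in> S \<and> t \<in> T1 \<and> t < s}"
    by (rule finite_subset[of _ "S \<times> T1"]) (use assms in auto)
  have f2: "finite {(s, t). s \<in> S \<and> t \<in> T2 \<and> t < s}"
    by (rule finite_subset[of _ "S \<times> T2"]) (use assms in auto)
  show ?thesis unfolding rsign_def e
    by (subst card_Un_disjoint) (use f1 f2 assms in \<open>auto simp: power_add\<close>)
qed

lemma rsign_sq: "rsign S T * rsign S T = 1"
  unfolding rsign_def by (simp flip: power_mult_distrib)

lemma rsign_sd_left:
  assumes "finite S" "finite S'" "finite T"
  shows "rsign (sd S S') T = rsign S T * rsign S' T"
proof -
  have a: "S = (S - S') \<union> (S \<inter> S')" and b: "S' = (S' - S) \<union> (S \<inter> S')" by auto
  have "rsign S T * rsign S' T = rsign (S - S') T * rsign (S' - S) T * (rsign (S \<inter> S') T * rsign (S \<inter> S') T)"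
    using rsign_Un_left[of "S - S'" "S \<inter> S'" T] rsign_Un_left[of "S' - S" "S \<inter> S'" T] assms a b
    by (metis (no_types, lifting) Diff_disjoint Int_Diff_disjoint finite_Diff finite_Int inf_commute mult.assoc mult.left_commute)
  also have "\<dots> = rsign (sd S S') T"
    unfolding sd_def rsign_sq using rsign_Un_left[of "S - S'" "S' - S" T] assms
    by (simp add: Diff_Int_distrib2 Int_Diff)
  finally show ?thesis by simp
qed

lemma rsign_sd_right:
  assumes "finite S" "finite T" "finite T'"
  shows "rsign S (sd T T') = rsign S T * rsign S T'"
proof -
  have a: "T = (T - T') \<union> (T \<inter> T')" and b: "T' = (T' - T) \<union> (T \<inter> T')" by auto
  have "rsign S T * rsign S T' = rsign S (T - T') * rsign S (T' - T) * (rsign S (T \<inter> T') * rsign S (T \<inter> T'))"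
    using rsign_Un_right[of "T - T'" "T \<inter> T'" S] rsign_Un_right[of "T' - T" "T \<inter> T'" S] assms a b
    by (metis (no_types, lifting) Diff_disjoint Int_Diff_disjoint finite_Diff finite_Int inf_commute mult.assoc mult.left_commute)
  also have "\<dots> = rsign S (sd T T')"
    unfolding sd_def rsign_sq using rsign_Un_right[of "T - T'" "T' - T" S] assms
    by (simp add: Diff_Int_distrib2 Int_Diff)
  finally show ?thesis by simp
qed

lemma cst_key:
  assumes "finite S" "finite T" "finite W"
  shows "cst p q S T * cst p q (sd S T) W = cst p q T W * cst p q S (sd T W)"
proof -
  let ?M = "(S \<inter> T) \<union> (sd S T \<inter> W)"
  have p1: "(\<Prod>i\<in>S \<inter> T. sig p q i) * (\<Prod>i\<in>sd S T \<inter> W. sig p q i) = (\<Prod>i\<in>?M. sig p q i)"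
    by (subst prod.union_disjoint) (use assms in \<open>auto simp: sd_def\<close>)
  have m: "?M = (T \<inter> W) \<union> (S \<inter> sd T W)" by (auto simp: sd_def)
  have p2: "(\<Prod>i\<in>T \<inter> W. sig p q i) * (\<Prod>i\<in>S \<inter> sd T W. sig p q i) = (\<Prod>i\<in>?M. sig p q i)"
    unfolding m by (subst prod.union_disjoint) (use assms in \<open>auto simp: sd_def\<close>)
  have fs: "finite (sd S T)" "finite (sd T W)" using assms by (auto simp: sd_def)
  have r: "rsign S T * rsign (sd S T) W = rsign T W * rsign S (sd T W)"
    using rsign_sd_left[OF assms(1,2,3)] rsign_sd_right[OF assms(1,2,3)] by simp
  have "cst p q S T * cst p q (sd S T) W = (rsign S T * rsign (sd S T) W) *
      ((\<Prod>i\<in>S \<inter> T. sig p q i) * (\<Prod>i\<in>sd S T \<inter> W. sig p q i))"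
    unfolding cst_def by (simp add: ac_simps)
  also have "\<dots> = (rsign T W * rsign S (sd T W)) *
      ((\<Prod>i\<in>T \<inter> W. sig p q i) * (\<Prod>i\<in>S \<inter> sd T W. sig p q i))"
    using r p1 p2 by simp
  also have "\<dots> = cst p q T W * cst p q S (sd T W)"
    unfolding cst_def by (simp add: ac_simps)
  finally show ?thesis .
qed

lemma bp_key:
  assumes "finite S" "finite T" "finite W"
  shows "cst p q S T * bp p q (sd S T) W U = cst p q T W * bp p q S (sd T W) U"
proof -
  have "sd (sd S T) W = sd S (sd T W)" by (auto simp: sd_def)
  then show ?thesis unfolding bp_def using cst_key[OF assms, of p q] by simp
qed

lemma bp_collapse:
  assumes "S \<in> Pow {0..<p+q}" "T \<in> Pow {0..<p+q}"
  shows "(\<Sum>R\<in>Pow {0..<p+q}. bp p q S T R * g R) = cst p q S T * g (sd S T)"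
proof -
  have m: "sd S T \<in> Pow {0..<p+q}" using assms by (auto simp: sd_def)
  have "(\<Sum>R\<in>Pow {0..<p+q}. bp p q S T R * g R) =
     (\<Sum>R\<in>Pow {0..<p+q}. if sd S T = R then cst p q S T * g (sd S T) else 0)"
    by (rule sum.cong) (auto simp: bp_def)
  also have "\<dots> = cst p q S T * g (sd S T)" using m by (simp add: sum.delta)
  finally show ?thesis .
qed

lemma perm4:
  fixes f :: "'a \<Rightarrow> 'a \<Rightarrow> 'a \<Rightarrow> 'a \<Rightarrow> real"
  shows "(\<Sum>r\<in>P. \<Sum>w\<in>P. \<Sum>s\<in>P. \<Sum>t\<in>P. f r w s t) = (\<Sum>s\<in>P. \<Sum>t\<in>P. \<Sum>w\<in>P. \<Sum>r\<in>P. f r w s t)"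
proof -
  have "(\<Sum>r\<in>P. \<Sum>w\<in>P. \<Sum>s\<in>P. \<Sum>t\<in>P. f r w s t) = (\<Sum>w\<in>P. \<Sum>r\<in>P. \<Sum>s\<in>P. \<Sum>t\<in>P. f r w s t)"
    by (rule sum.swap)
  also have "\<dots> = (\<Sum>w\<in>P. \<Sum>s\<in>P. \<Sum>r\<in>P. \<Sum>t\<in>P. f r w s t)"
    by (rule sum.cong[OF refl], rule sum.swap)
  also have "\<dots> = (\<Sum>w\<in>P. \<Sum>s\<in>P. \<Sum>t\<in>P. \<Sum>r\<in>P. f r w s t)"
    by (rule sum.cong[OF refl], rule sum.cong[OF refl], rule sum.swap)
  also have "\<dots> = (\<Sum>s\<in>P. \<Sum>w\<in>P. \<Sum>t\<in>P. \<Sum>r\<in>P. f r w s t)"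
    by (rule sum.swap)
  also have "\<dots> = (\<Sum>s\<in>P. \<Sum>t\<in>P. \<Sum>w\<in>P. \<Sum>r\<in>P. f r w s t)"
    by (rule sum.cong[OF refl], rule sum.swap)
  finally show ?thesis .
qed

lemma perm4b:
  fixes f :: "'a \<Rightarrow> 'a \<Rightarrow> 'a \<Rightarrow> 'a \<Rightarrow> real"
  shows "(\<Sum>s\<in>P. \<Sum>t\<in>P. \<Sum>w\<in>P. \<Sum>r\<in>P. f s t w r) = (\<Sum>s\<in>P. \<Sum>r\<in>P. \<Sum>t\<in>P. \<Sum>w\<in>P. f s t w r)"
proof -
  have "(\<Sum>s\<in>P. \<Sum>t\<in>P. \<Sum>w\<in>P. \<Sum>r\<in>P. f s t w r) = (\<Sum>s\<in>P. \<Sum>t\<in>P. \<Sum>r\<in>P. \<Sum>w\<in>P. f s t w r)"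
    by (rule sum.cong[OF refl], rule sum.cong[OF refl], rule sum.swap)
  also have "\<dots> = (\<Sum>s\<in>P. \<Sum>r\<in>P. \<Sum>t\<in>P. \<Sum>w\<in>P. f s t w r)"
    by (rule sum.cong[OF refl], rule sum.swap)
  finally show ?thesis .
qed

lemma gp_assoc: "gp p q (gp p q A B) C = gp p q A (gp p q B C)"
proof (rule ext)
  fix U
  let ?P = "Pow {0..<p+q}"
  have "gp p q (gp p q A B) C U =
     (\<Sum>R\<in>?P. \<Sum>W\<in>?P. \<Sum>S\<in>?P. \<Sum>T\<in>?P. A S * B T * C W * (bp p q S T R * bp p q R W U))"
    unfolding gp_alt[of p q _ C] unfolding gp_alt
    by (simp add: sum_distrib_right sum_distrib_left ac_simps)
  also have "\<dots> = (\<Sum>S\<in>?P. \<Sum>T\<in>?P. \<Sum>W\<in>?P. \<Sum>R\<in>?P. A S * B T * C W * (bp p q S T R * bp p q R W U))"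
    by (rule perm4)
  also have "\<dots> = (\<Sum>S\<in>?P. \<Sum>T\<in>?P. \<Sum>W\<in>?P. A S * B T * C W * (cst p q S T * bp p q (sd S T) W U))"
    by (intro sum.cong refl) (simp add: sum_distrib_left[symmetric] bp_collapse mult.assoc)
  also have "\<dots> = (\<Sum>S\<in>?P. \<Sum>T\<in>?P. \<Sum>W\<in>?P. A S * B T * C W * (cst p q T W * bp p q S (sd T W) U))"
    by (intro sum.cong refl) (simp add: bp_key finite_subset)
  also have "\<dots> = (\<Sum>S\<in>?P. \<Sum>T\<in>?P. \<Sum>W\<in>?P. \<Sum>R\<in>?P. A S * B T * C W * (bp p q T W R * bp p q S R U))"
    by (intro sum.cong refl) (simp add: sum_distrib_left[symmetric] bp_collapse mult.assoc)
  also have "\<dots> = (\<Sum>S\<in>?P. \<Sum>R\<in>?P. \<Sum>T\<in>?P. \<Sum>W\<in>?P. A S * B T * C W * (bp p q T W R * bp p q S R U))"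
    by (rule perm4b)
  also have "\<dots> = gp p q A (gp p q B C) U"
    unfolding gp_alt[of p q A _] unfolding gp_alt
    by (simp add: sum_distrib_right sum_distrib_left ac_simps)
  finally show "gp p q (gp p q A B) C U = gp p q A (gp p q B C) U" .
qed


lemma gp_lin_left: "gp p q (\<lambda>S. a * X S + c * Y S) Z = (\<lambda>U. a * gp p q X Z U + c * gp p q Y Z U)"
  by (rule ext) (simp add: gp_alt sum_distrib_left sum.distrib algebra_simps)

lemma gp_lin_right: "gp p q Z (\<lambda>S. a * X S + c * Y S) = (\<lambda>U. a * gp p q Z X U + c * gp p q Z Y U)"
  by (rule ext) (simp add: gp_alt sum_distrib_left sum.distrib algebra_simps)

lemma gp_smul_left: "gp p q (\<lambda>S. a * X S) Z = (\<lambda>U. a * gp p q X Z U)"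
  by (rule ext) (simp add: gp_alt sum_distrib_left algebra_simps)

lemma gp_smul_right: "gp p q Z (\<lambda>S. a * X S) = (\<lambda>U. a * gp p q Z X U)"
  by (rule ext) (simp add: gp_alt sum_distrib_left algebra_simps)

lemma gp_neg_left: "gp p q (\<lambda>S. - X S) Z = (\<lambda>U. - gp p q X Z U)"
  using gp_smul_left[of p q "-1" X Z] by simp

lemma gp_neg_right: "gp p q Z (\<lambda>S. - X S) = (\<lambda>U. - gp p q Z X U)"
  using gp_smul_right[of p q Z "-1" X] by simp

lemma gp_mv_in: "mv_in p q (gp p q A B)"
  unfolding mv_in_def gp_def
proof (intro allI impI ext)
  fix U assume "\<not> U \<subseteq> {0..<p + q}"
  then have "\<forall>S\<in>Pow {0..<p+q}. \<forall>T\<in>Pow {0..<p+q}. (S - T) \<union> (T - S) \<noteq> U" by blast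
  then show "(\<Sum>S\<in>Pow {0..<p+q}. \<Sum>T\<in>Pow {0..<p+q}.
      if (S - T) \<union> (T - S) = U
      then A S * B T * rsign S T * (\<Prod>i\<in>S \<inter> T. sig p q i) else 0) = 0" by simp
qed

lemma rsign_empty_left: "rsign {} T = 1" by (simp add: rsign_def)
lemma rsign_empty_right: "rsign S {} = 1" by (simp add: rsign_def)

lemma gp_scalar_left:
  assumes "mv_in p q X"
  shows "gp p q (scalar a) X = (\<lambda>U. a * X U)"
proof (rule ext)
  fix U
  let ?P = "Pow {0..<p+q}"
  have "gp p q (scalar a) X U = (\<Sum>S\<in>?P. if S = {} then (\<Sum>T\<in>?P. a * X T * bp p q {} T U) else 0)"
    unfolding gp_alt scalar_def by (rule sum.cong) auto
  also have "\<dots> = (\<Sum>T\<in>?P. a * X T * bp p q {} T U)" by (simp add: sum.delta')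
  also have "\<dots> = (\<Sum>T\<in>?P. if T = U then a * X U else 0)"
    by (rule sum.cong) (auto simp: bp_def sd_def cst_def rsign_empty_left)
  also have "\<dots> = a * X U" using assms by (auto simp: sum.delta' mv_in_def)
  finally show "gp p q (scalar a) X U = a * X U" .
qed

lemma gp_scalar_right:
  assumes "mv_in p q X"
  shows "gp p q X (scalar a) = (\<lambda>U. a * X U)"
proof (rule ext)
  fix U
  let ?P = "Pow {0..<p+q}"
  have "gp p q X (scalar a) U = (\<Sum>S\<in>?P. X S * a * bp p q S {} U)"
    unfolding gp_alt scalar_def
  proof (rule sum.cong[OF refl])
    fix S
    have "(\<Sum>T\<in>?P. X S * (if T = {} then a else 0) * bp p q S T U) =
        (\<Sum>T\<in>?P. if T = {} then X S * a * bp p q S {} U else 0)"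
      by (rule sum.cong) auto
    then show "(\<Sum>T\<in>?P. X S * (if T = {} then a else 0) * bp p q S T U) = X S * a * bp p q S {} U"
      by (simp add: sum.delta')
  qed
  also have "\<dots> = (\<Sum>S\<in>?P. if S = U then a * X U else 0)"
    by (rule sum.cong) (auto simp: bp_def sd_def cst_def rsign_empty_right)
  also have "\<dots> = a * X U" using assms by (auto simp: sum.delta' mv_in_def)
  finally show "gp p q X (scalar a) U = a * X U" .
qed

lemma mv_in_scalar: "mv_in p q (scalar c)"
  by (auto simp: mv_in_def scalar_def)

lemma mv_in_wedge: "mv_in p q (wedge p q A B)"
  unfolding mv_in_def wedge_def
proof (intro allI impI ext)
  fix U assume "\<not> U \<subseteq> {0..<p + q}"
  then have "\<forall>S\<in>Pow {0..<p+q}. \<forall>T\<in>Pow {0..<p+q}. \<not> (S \<inter> T = {} \<and> S \<union> T = U)" by blast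
  then show "(\<Sum>S\<in>Pow {0..<p+q}. \<Sum>T\<in>Pow {0..<p+q}.
      if S \<inter> T = {} \<and> S \<union> T = U then A S * B T * rsign S T else 0) = 0"
    by (intro sum.neutral ballI) auto
qed

lemma blade_mv_in: "blade p q B \<Longrightarrow> mv_in p q B"
  unfolding blade_def
proof (elim disjE exE conjE)
  fix vs assume "B = foldr (wedge p q) vs (scalar 1)"
  then show "mv_in p q B" by (cases vs) (auto simp: mv_in_scalar mv_in_wedge)
qed (auto simp: mv_in_scalar)


lemma ginv_eq:
  assumes mB: "mv_in p q B" and BB: "gp p q B B = scalar b" and b: "b \<noteq> 0"
  shows "ginv p q B = (\<lambda>S. (1/b) * B S)"
proof -
  let ?Bi = "\<lambda>S. (1/b) * B S"
  have mBi: "mv_in p q ?Bi" using mB by (simp add: mv_in_def)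
  have sc: "(\<lambda>U. (1/b) * scalar b U) = scalar 1" using b by (auto simp: scalar_def fun_eq_iff)
  have h1: "gp p q B ?Bi = scalar 1" unfolding gp_smul_right BB sc ..
  have h2: "gp p q ?Bi B = scalar 1" unfolding gp_smul_left BB sc ..
  have u: "X = ?Bi" if "mv_in p q X \<and> gp p q B X = scalar 1 \<and> gp p q X B = scalar 1" for X
  proof -
    have "X = gp p q X (scalar 1)" using that gp_scalar_right[of p q X 1] by simp
    also have "\<dots> = gp p q X (gp p q B ?Bi)" using h1 by simp
    also have "\<dots> = gp p q (gp p q X B) ?Bi" by (simp add: gp_assoc)
    also have "\<dots> = ?Bi" using that gp_scalar_left[OF mBi, of 1] by simp
    finally show ?thesis .
  qed
  show ?thesis unfolding ginv_def
    by (rule the1_equality) (use u mBi h1 h2 in blast)+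
qed

definition phi :: "nat \<Rightarrow> nat \<Rightarrow> mv \<Rightarrow> mv \<Rightarrow> mv" where
  "phi p q B X = gp p q (gp p q (ginv p q B) X) B"

lemma phi_eq:
  assumes "mv_in p q B" "gp p q B B = scalar b" "b \<noteq> 0"
  shows "phi p q B X = (\<lambda>U. (1/b) * gp p q (gp p q B X) B U)"
  unfolding phi_def ginv_eq[OF assms] by (simp only: gp_smul_left)

lemma phi_comm:
  assumes "mv_in p q B" "gp p q B B = scalar b" "b \<noteq> 0"
    and "mv_in p q C" "gp p q C C = scalar c" "c \<noteq> 0"
    and co: "gp p q B C = gp p q C B \<or> gp p q B C = (\<lambda>S. - gp p q C B S)"
  shows "phi p q B (phi p q C X) = phi p q C (phi p q B X)"
proof -
  have l: "phi p q B (phi p q C X) = (\<lambda>U. (1/b) * ((1/c) * gp p q (gp p q (gp p q B C) X) (gp p q C B) U))"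
    unfolding phi_eq[OF assms(1-3)] phi_eq[OF assms(4-6)]
    by (simp only: gp_smul_left gp_smul_right gp_assoc)
  have r: "phi p q C (phi p q B X) = (\<lambda>U. (1/c) * ((1/b) * gp p q (gp p q (gp p q C B) X) (gp p q B C) U))"
    unfolding phi_eq[OF assms(1-3)] phi_eq[OF assms(4-6)]
    by (simp only: gp_smul_left gp_smul_right gp_assoc)
  from co show ?thesis
  proof
    assume "gp p q B C = gp p q C B" then show ?thesis unfolding l r by (simp add: mult.commute)
  next
    assume e: "gp p q B C = (\<lambda>S. - gp p q C B S)"
    show ?thesis unfolding l r e by (simp add: gp_neg_left gp_neg_right mult.commute)
  qed
qed

definition sg :: "nat \<Rightarrow> real" where "sg j = (if j = 0 then 1 else -1)"

lemma cproj_phi: "cproj p q j B X = (\<lambda>S. (1/2) * X S + (sg j / 2) * phi p q B X S)"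
  by (auto simp: cproj_def phi_def sg_def fun_eq_iff)

lemma phi_lin: "phi p q B (\<lambda>S. a * X S + c * Y S) = (\<lambda>U. a * phi p q B X U + c * phi p q B Y U)"
  unfolding phi_def by (simp add: gp_lin_right gp_lin_left)

lemma cproj_comm:
  assumes "phi p q B (phi p q C X) = phi p q C (phi p q B X)"
  shows "cproj p q j B (cproj p q k C X) = cproj p q k C (cproj p q j B X)"
  unfolding cproj_phi phi_lin using assms by (simp add: fun_eq_iff algebra_simps)


theorem lemma3p4:
  fixes p q d :: nat and Bs :: "mv list" and js :: "nat list" and A :: mv
    and \<sigma> :: "nat \<Rightarrow> nat"
  assumes "length Bs = d" and "length js = d"
    and "\<forall>k<d. blade p q (Bs ! k)"
    and "\<forall>k<d. \<forall>l<d. k \<noteq> l \<longrightarrow> coorthogonal p q (Bs ! k) (Bs ! l)"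
    and "\<forall>k<d. \<exists>c. c \<noteq> 0 \<and> gp p q (Bs ! k) (Bs ! k) = scalar c"
    and "mv_in p q A"
    and "\<forall>j\<in>set js. j \<in> {0, 1}"
    and "\<sigma> permutes {0..<d}"
  shows "cproj_fwd p q (map (\<lambda>i. js ! \<sigma> i) [0..<d]) (map (\<lambda>i. Bs ! \<sigma> i) [0..<d]) A
           = cproj_fwd p q js Bs A
       \<and> cproj_bwd p q (map (\<lambda>i. js ! \<sigma> i) [0..<d]) (map (\<lambda>i. Bs ! \<sigma> i) [0..<d]) A
           = cproj_bwd p q js Bs A"
proof -
  define g where "g i = (Bs ! i, js ! i)" for i
  define f where "f = (\<lambda>(B, j) X. cproj p q j B X)"
  have z1: "zip Bs js = map g [0..<d]"
    using assms(1,2) by (auto simp: g_def list_eq_iff_nth_eq)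
  have z2: "zip (map (\<lambda>i. Bs ! \<sigma> i) [0..<d]) (map (\<lambda>i. js ! \<sigma> i) [0..<d]) = map g (map \<sigma> [0..<d])"
    by (auto simp: g_def list_eq_iff_nth_eq)
  have ms: "mset (map \<sigma> [0..<d]) = mset [0..<d]"
  proof -
    have "distinct (map \<sigma> [0..<d])"
      using permutes_inj_on[OF assms(8)] by (simp add: distinct_map)
    moreover have "set (map \<sigma> [0..<d]) = set [0..<d]"
      using permutes_image[OF assms(8)] by simp
    ultimately show ?thesis by (metis distinct_upt set_eq_iff_mset_eq_distinct)
  qed
  have ms1: "mset (map g (map \<sigma> [0..<d])) = mset (map g [0..<d])"
    using ms by (metis mset_map)
  have ms2: "mset (rev (map g (map \<sigma> [0..<d]))) = mset (rev (map g [0..<d]))"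
    using ms1 by simp
  have comm: "f x \<circ> f y = f y \<circ> f x" if xy: "x \<in> set (map g [0..<d])" "y \<in> set (map g [0..<d])" for x y
  proof -
    obtain i k where ik: "i < d" "k < d" "x = g i" "y = g k" using xy unfolding set_map set_upt by auto
    show ?thesis
    proof (cases "i = k")
      case True then show ?thesis using ik by simp
    next
      case False
      obtain b where b: "b \<noteq> 0" "gp p q (Bs ! i) (Bs ! i) = scalar b" using assms(5) ik by blast
      obtain c where c: "c \<noteq> 0" "gp p q (Bs ! k) (Bs ! k) = scalar c" using assms(5) ik by blast
      have mi: "mv_in p q (Bs ! i)" "mv_in p q (Bs ! k)" using assms(3) ik blade_mv_in by auto
      have co: "gp p q (Bs ! i) (Bs ! k) = gp p q (Bs ! k) (Bs ! i) \<or>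
          gp p q (Bs ! i) (Bs ! k) = (\<lambda>S. - gp p q (Bs ! k) (Bs ! i) S)"
        using assms(4) ik False by (auto simp: coorthogonal_def)
      have pc: "\<And>X. phi p q (Bs ! i) (phi p q (Bs ! k) X) = phi p q (Bs ! k) (phi p q (Bs ! i) X)"
        by (rule phi_comm[OF mi(1) b(2) b(1) mi(2) c(2) c(1) co])
      then show ?thesis using ik cproj_comm[OF pc] by (simp add: f_def g_def fun_eq_iff)
    qed
  qed
  have fw: "foldl (\<lambda>X (B, j). cproj p q j B X) A xs = fold f xs A" for xs
    by (simp add: foldl_conv_fold f_def case_prod_unfold)
  have bw: "foldr (\<lambda>(B, j) X. cproj p q j B X) xs A = fold f (rev xs) A" for xs
    by (simp add: foldr_conv_fold f_def)
  have e1: "fold f (map g [0..<d]) = fold f (map g (map \<sigma> [0..<d]))"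
    by (rule fold_multiset_equiv, rule comm, assumption, assumption, rule ms1[symmetric])
  have e2: "fold f (rev (map g [0..<d])) = fold f (rev (map g (map \<sigma> [0..<d])))"
  proof (rule fold_multiset_equiv)
    fix x y assume "x \<in> set (rev (map g [0..<d]))" "y \<in> set (rev (map g [0..<d]))"
    then show "f x \<circ> f y = f y \<circ> f x" by (intro comm) (simp_all only: set_rev)
  qed (rule ms2[symmetric])
  show ?thesis
    unfolding cproj_fwd_def cproj_bwd_def z1 z2 fw bw e1[symmetric] e2[symmetric] by simp
qed

end
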